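(* Fix $C<e^{-1}$ and $\theta>0$. There are positive constants $M$ and $L_2$ such that \[ \mathbb{P}\Big(\bigcap_{1\le j\le n}\{\#\mathcal{E}_j\le M\log n\}\Big)\ \ge\ 1-\frac{1}{n^{\theta}} \] for all $n\ge L_2$.
   Context: Let $C>0$ be a constant and $(\alpha_n)_{n\ge1}$ a sequence of nonnegative reals with $\alpha_n\to0$. For each $n$, consider the complete graph $K_n$ on vertex set $\{1,\dots,n\}$; each edge $e$ of $K_n$ is independently open with probability $p_n(e)$ and closed otherwise, where $\frac{C-\alpha_n}{n}\le p_n(e)\le\frac{C+\alpha_n}{n}$ for every edge $e$. Let $G$ be the resulting random graph of open edges, with probability measure $\mathbb{P}$. For a vertex $i$, $\mathcal{E}_i$ denotes the open component of $G$ containing $i$ (the set of vertices joined to $i$ by a path of open edges, together with $i$ itself), and $\#\mathcal{E}_i$ its number of vertices. $\log$ is the natural logarithm. *)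

theory Defs
  imports "HOL-Probability.Probability"
begin

definition Kn_edges :: "nat \<Rightarrow> nat set set" where
  "Kn_edges n = {{i, j} | i j. i \<in> {1..n} \<and> j \<in> {1..n} \<and> i \<noteq> j}"

definition open_adj :: "nat \<Rightarrow> (nat set \<Rightarrow> bool) \<Rightarrow> nat \<Rightarrow> nat \<Rightarrow> bool" where
  "open_adj n \<omega> i j \<longleftrightarrow> i \<in> {1..n} \<and> j \<in> {1..n} \<and> i \<noteq> j \<and> \<omega> {i, j}"

definition open_component :: "nat \<Rightarrow> (nat set \<Rightarrow> bool) \<Rightarrow> nat \<Rightarrow> nat set" where
  "open_component n \<omega> i = {j. (open_adj n \<omega>)\<^sup>*\<^sup>* i j}"

definition random_graph :: "nat \<Rightarrow> (nat set \<Rightarrow> real) \<Rightarrow> (nat set \<Rightarrow> bool) pmf" where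
  "random_graph n p = Pi_pmf (Kn_edges n) False (\<lambda>e. bernoulli_pmf (p e))"

end

theory Submission
  imports Defs
begin


lemma rtranclp_exit:
  assumes "R\<^sup>*\<^sup>* a b" "a \<in> S" "b \<notin> S"
  shows "\<exists>u w. u \<in> S \<and> w \<notin> S \<and> R u w \<and> R\<^sup>*\<^sup>* a u"
  using assms
proof (induction rule: rtranclp_induct)
  case base then show ?case by simp
next
  case (step y z)
  show ?case
  proof (cases "y \<in> S")
    case True then show ?thesis using step by blast
  next
    case False then show ?thesis using step by blast
  qed
qed

lemma tree_exists:
  fixes R :: "nat \<Rightarrow> nat \<Rightarrow> bool"
  assumes fin: "finite {x. R\<^sup>*\<^sup>* j x}" and sym: "\<And>a b. R a b \<Longrightarrow> R b a"
  shows "1 \<le> m \<Longrightarrow> m \<le> card {x. R\<^sup>*\<^sup>* j x} \<Longrightarrow>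
    \<exists>S f h. S \<subseteq> {x. R\<^sup>*\<^sup>* j x} \<and> j \<in> S \<and> card S = m \<and> f \<in> (S - {j}) \<rightarrow>\<^sub>E S \<and>
       (\<forall>v\<in>S-{j}. R v (f v) \<and> h (f v) < (h v::nat))"
proof (induction m)
  case 0 then show ?case by simp
next
  case (Suc m)
  show ?case
  proof (cases "m = 0")
    case True
    then show ?thesis
      by (rule_tac x="{j}" in exI, rule_tac x="\<lambda>_. undefined" in exI) auto
  next
    case False
    then obtain S f h where S: "S \<subseteq> {x. R\<^sup>*\<^sup>* j x}" "j \<in> S" "card S = m" "f \<in> (S - {j}) \<rightarrow>\<^sub>E S"
       "\<forall>v\<in>S-{j}. R v (f v) \<and> h (f v) < (h v::nat)"
      using Suc.IH Suc.prems False by (metis One_nat_def Suc_leD less_one not_less)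
    have "\<not> {x. R\<^sup>*\<^sup>* j x} \<subseteq> S"
    proof
      assume "{x. R\<^sup>*\<^sup>* j x} \<subseteq> S"
      then have "{x. R\<^sup>*\<^sup>* j x} = S" using S(1) by blast
      then show False using Suc.prems S(3) by simp
    qed
    then obtain x where x: "R\<^sup>*\<^sup>* j x" "x \<notin> S" by blast
    obtain u w where uw: "u \<in> S" "w \<notin> S" "R u w" "R\<^sup>*\<^sup>* j u"
      using rtranclp_exit[OF x(1) S(2) x(2)] by blast
    have finS: "finite S" using S(1) fin finite_subset by blast
    have wj: "w \<noteq> j" using uw S(2) by blast
    show ?thesis
    proof (rule exI[of _ "insert w S"], rule exI[of _ "f(w := u)"], rule exI[of _ "h(w := h u + 1)"], intro conjI)
      show "insert w S \<subseteq> {x. R\<^sup>*\<^sup>* j x}" using S(1) uw by auto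
      show "j \<in> insert w S" using S by simp
      show "card (insert w S) = Suc m" using finS uw S(3) by simp
      show "f(w := u) \<in> (insert w S - {j}) \<rightarrow>\<^sub>E insert w S"
        using S(4) uw wj by (auto simp: PiE_def extensional_def Pi_def)
      show "\<forall>v\<in>insert w S - {j}. R v ((f(w := u)) v) \<and> (h(w := h u + 1)) ((f(w := u)) v) < (h(w := h u + 1)) v"
      proof
        fix v assume v: "v \<in> insert w S - {j}"
        show "R v ((f(w := u)) v) \<and> (h(w := h u + 1)) ((f(w := u)) v) < (h(w := h u + 1)) v"
        proof (cases "v = w")
          case True then show ?thesis using uw sym by auto
        next
          case False
          then have "v \<in> S - {j}" using v by auto
          then have "f v \<in> S" using S(4) by auto
          then have "f v \<noteq> w" using uw by auto
          then show ?thesis using False S(5) \<open>v \<in> S - {j}\<close> by auto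
        qed
      qed
    qed
  qed
qed



lemma finite_Kn: "finite (Kn_edges n)"
proof -
  have "Kn_edges n \<subseteq> Pow {1..n}" unfolding Kn_edges_def by auto
  then show ?thesis by (rule finite_subset) simp
qed

lemma prob_edges:
  assumes E: "E \<subseteq> Kn_edges n" and p: "\<forall>e\<in>Kn_edges n. 0 \<le> p e \<and> p e \<le> 1"
  shows "measure_pmf.prob (random_graph n p) {\<omega>. \<forall>e\<in>E. \<omega> e} = (\<Prod>e\<in>E. p e)"
proof -
  define B where "B = (\<lambda>e. if e \<in> E then {True} else (UNIV :: bool set))"
  have eq: "{\<omega>. \<forall>e\<in>E. \<omega> e} = Pi (Kn_edges n) B"
    using E by (auto simp: B_def Pi_def)
  have "measure_pmf.prob (random_graph n p) {\<omega>. \<forall>e\<in>E. \<omega> e}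
      = (\<Prod>e\<in>Kn_edges n. measure_pmf.prob (bernoulli_pmf (p e)) (B e))"
    unfolding eq random_graph_def by (rule measure_Pi_pmf_Pi[OF finite_Kn])
  also have "\<dots> = (\<Prod>e\<in>Kn_edges n. if e \<in> E then p e else 1)"
    by (rule prod.cong) (use p in \<open>auto simp: B_def measure_pmf_single\<close>)
  also have "\<dots> = (\<Prod>e\<in>E. p e)"
    using E by (simp add: prod.If_cases finite_Kn Int_absorb1)
  finally show ?thesis .
qed



lemma comp_subset:
  assumes "j \<in> {1..n}"
  shows "open_component n \<omega> j \<subseteq> {1..n}"
proof
  fix x assume "x \<in> open_component n \<omega> j"
  then have "(open_adj n \<omega>)\<^sup>*\<^sup>* j x" by (simp add: open_component_def)
  then show "x \<in> {1..n}"
    by (induction rule: rtranclp_induct) (use assms in \<open>auto simp: open_adj_def\<close>)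
qed

lemma tail_bound:
  assumes p: "\<forall>e\<in>Kn_edges n. 0 \<le> p e \<and> p e \<le> 1 \<and> p e \<le> c / real n"
    and k: "k \<ge> 1" and c: "c \<ge> 0" and n: "n \<ge> 1"
  shows "measure_pmf.prob (random_graph n p) {\<omega>. \<exists>j\<in>{1..n}. k \<le> card (open_component n \<omega> j)}
     \<le> real n * (real (n choose k) * real k ^ (k - 1) * (c / real n) ^ (k - 1))"
proof -
  define T where "T = (\<lambda>j. {(S, f). S \<subseteq> {1..n} \<and> j \<in> S \<and> card S = k \<and> f \<in> (S - {j}) \<rightarrow>\<^sub>E S \<and>
      (\<forall>v\<in>S-{j}. f v \<noteq> v) \<and> inj_on (\<lambda>v. {v, f v}) (S - {j})})"
  define ev where "ev = (\<lambda>j (S, f). {\<omega>::nat set \<Rightarrow> bool. \<forall>v\<in>S-{j}. \<omega> {v, f v}})"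
  define SS where "SS = (\<lambda>j. {S. S \<subseteq> {1..n} \<and> card S = k \<and> j \<in> S})"
  let ?P = "measure_pmf.prob (random_graph n p)"
  have Tsub: "T j \<subseteq> Sigma (SS j) (\<lambda>S. (S - {j}) \<rightarrow>\<^sub>E S)" for j
    unfolding T_def SS_def by auto
  have finSS: "finite (SS j)" for j
    by (rule finite_subset[of _ "Pow {1..n}"]) (auto simp: SS_def)
  have finS': "finite S" if "S \<in> SS j" for S j
    using that unfolding SS_def by (metis (no_types, lifting) finite_atLeastAtMost finite_subset mem_Collect_eq)
  have finPi: "finite ((S - {j}) \<rightarrow>\<^sub>E S)" if "S \<in> SS j" for S j
    using finS'[OF that] by (intro finite_PiE) simp_all
  have finSig: "finite (Sigma (SS j) (\<lambda>S. (S - {j}) \<rightarrow>\<^sub>E S))" for j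
    by (rule finite_SigmaI[OF finSS finPi])
  have finT: "finite (T j)" for j using Tsub finSig finite_subset by blast
  have cardSig: "card (Sigma (SS j) (\<lambda>S. (S - {j}) \<rightarrow>\<^sub>E S)) = card (SS j) * k ^ (k - 1)" for j
  proof -
    have "card (Sigma (SS j) (\<lambda>S. (S - {j}) \<rightarrow>\<^sub>E S)) = (\<Sum>S\<in>SS j. card ((S - {j}) \<rightarrow>\<^sub>E S))"
      by (rule card_SigmaI[OF finSS]) (use finPi in blast)
    also have "\<dots> = (\<Sum>S\<in>SS j. k ^ (k - 1))"
    proof (rule sum.cong[OF refl])
      fix S assume S: "S \<in> SS j"
      then have fS: "finite S" by (rule finS')
      have "card ((S - {j}) \<rightarrow>\<^sub>E S) = (\<Prod>i\<in>S-{j}. card S)" by (simp add: card_PiE fS)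
      also have "\<dots> = k ^ (k - 1)" using S fS by (simp add: SS_def)
      finally show "card ((S - {j}) \<rightarrow>\<^sub>E S) = k ^ (k - 1)" .
    qed
    finally show ?thesis by simp
  qed
  have cardSS: "card (SS j) \<le> n choose k" for j
  proof -
    have "card (SS j) \<le> card {S. S \<subseteq> {1..n} \<and> card S = k}"
      by (rule card_mono) (auto simp: SS_def)
    also have "\<dots> = n choose k" by (simp add: n_subsets)
    finally show ?thesis .
  qed
  have cardT: "real (card (T j)) \<le> real (n choose k) * real k ^ (k - 1)" for j
  proof -
    have "card (T j) \<le> card (SS j) * k ^ (k - 1)"
      using card_mono[OF finSig Tsub] cardSig by simp
    also have "\<dots> \<le> (n choose k) * k ^ (k - 1)" using cardSS by simp
    finally show ?thesis by (metis of_nat_le_iff of_nat_mult of_nat_power)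
  qed
  have cover: "{\<omega>. \<exists>j\<in>{1..n}. k \<le> card (open_component n \<omega> j)} \<subseteq> (\<Union>j\<in>{1..n}. \<Union>x\<in>T j. ev j x)"
  proof
    fix \<omega> assume "\<omega> \<in> {\<omega>. \<exists>j\<in>{1..n}. k \<le> card (open_component n \<omega> j)}"
    then obtain j where j: "j \<in> {1..n}" "k \<le> card (open_component n \<omega> j)" by auto
    let ?R = "open_adj n \<omega>"
    have cs: "{x. ?R\<^sup>*\<^sup>* j x} \<subseteq> {1..n}" using comp_subset[OF j(1)] by (simp add: open_component_def)
    have fin: "finite {x. ?R\<^sup>*\<^sup>* j x}" using cs finite_subset by blast
    have sym: "?R a b \<Longrightarrow> ?R b a" for a b by (auto simp: open_adj_def insert_commute)
    have kc: "k \<le> card {x. ?R\<^sup>*\<^sup>* j x}" using j(2) by (simp add: open_component_def)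
    obtain S f h where S: "S \<subseteq> {x. ?R\<^sup>*\<^sup>* j x}" "j \<in> S" "card S = k" "f \<in> (S - {j}) \<rightarrow>\<^sub>E S"
       "\<forall>v\<in>S-{j}. ?R v (f v) \<and> h (f v) < (h v::nat)"
      using tree_exists[OF fin sym k kc] by blast
    have inj: "inj_on (\<lambda>v. {v, f v}) (S - {j})"
    proof (rule inj_onI)
      fix v w assume v: "v \<in> S - {j}" and w: "w \<in> S - {j}" and eq: "{v, f v} = {w, f w}"
      show "v = w"
      proof (rule ccontr)
        assume "v \<noteq> w"
        then have vw: "v = f w" "w = f v" using eq by (auto simp: doubleton_eq_iff)
        have "h (f v) < h v" "h (f w) < h w" using S(5) v w by auto
        then show False using vw by (metis less_asym)
      qed
    qed
    have S1: "S \<subseteq> {1..n}" using S(1) cs by blast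
    have S2: "\<forall>v\<in>S-{j}. f v \<noteq> v"
    proof
      fix v assume "v \<in> S-{j}"
      then have "open_adj n \<omega> v (f v)" using S(5) by blast
      then show "f v \<noteq> v" by (auto simp: open_adj_def)
    qed
    have "(S, f) \<in> T j"
      unfolding T_def mem_Collect_eq prod.case using S1 S2 S(2,3,4) inj by simp
    moreover have "\<omega> \<in> ev j (S, f)" using S(5) by (auto simp: ev_def open_adj_def)
    ultimately have "\<omega> \<in> (\<Union>x\<in>T j. ev j x)" by (rule UN_I)
    then show "\<omega> \<in> (\<Union>j\<in>{1..n}. \<Union>x\<in>T j. ev j x)" using j(1) by (rule UN_I[rotated])
  qed
  have evb: "?P (ev j x) \<le> (c / real n) ^ (k - 1)" if x: "x \<in> T j" for j x
  proof -
    obtain S f where xS: "x = (S, f)" by (cases x)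
    have S: "S \<subseteq> {1..n}" "j \<in> S" "card S = k" "f \<in> (S - {j}) \<rightarrow>\<^sub>E S"
      "\<forall>v\<in>S-{j}. f v \<noteq> v" "inj_on (\<lambda>v. {v, f v}) (S - {j})"
      using x xS by (auto simp: T_def)
    define E where "E = (\<lambda>v. {v, f v}) ` (S - {j})"
    have fS: "finite S" using S(1) finite_subset by blast
    have cE: "card E = k - 1" unfolding E_def using card_image[OF S(6)] S(2,3) fS by simp
    have EK: "E \<subseteq> Kn_edges n"
    proof
      fix e assume "e \<in> E"
      then obtain v where v: "v \<in> S - {j}" "e = {v, f v}" unfolding E_def by blast
      have fvS: "f v \<in> S" using S(4) v(1) by (rule PiE_mem)
      have vn: "v \<in> {1..n}" using v(1) S(1) by blast
      have ne: "f v \<noteq> v" using v(1) S(5) by blast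
      have fvn: "f v \<in> {1..n}" using S(1) fvS by (rule subsetD)
      have "\<exists>a b. e = {a, b} \<and> a \<in> {1..n} \<and> b \<in> {1..n} \<and> a \<noteq> b"
      proof (rule exI[of _ v], rule exI[of _ "f v"], intro conjI)
        show "e = {v, f v}" by (rule v(2))
        show "v \<in> {1..n}" by (rule vn)
        show "f v \<in> {1..n}" by (rule fvn)
        show "v \<noteq> f v" using ne by (rule not_sym)
      qed
      then show "e \<in> Kn_edges n" unfolding Kn_edges_def by (simp only: mem_Collect_eq)
    qed
    have evE: "ev j x = {\<omega>. \<forall>e\<in>E. \<omega> e}" unfolding xS ev_def E_def by auto
    have pp: "\<forall>e\<in>Kn_edges n. 0 \<le> p e \<and> p e \<le> 1" using p by blast
    have "?P (ev j x) = ?P {\<omega>. \<forall>e\<in>E. \<omega> e}" by (simp only: evE)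
    also have "\<dots> = (\<Prod>e\<in>E. p e)" by (rule prob_edges[OF EK pp])
    also have "\<dots> \<le> (\<Prod>e\<in>E. c / real n)"
    proof (rule prod_mono)
      fix e assume "e \<in> E"
      then have "e \<in> Kn_edges n" using EK by blast
      then show "0 \<le> p e \<and> p e \<le> c / real n" using p by blast
    qed
    also have "\<dots> = (c / real n) ^ (k - 1)" using cE by simp
    finally show ?thesis .
  qed
  have "?P {\<omega>. \<exists>j\<in>{1..n}. k \<le> card (open_component n \<omega> j)} \<le> ?P (\<Union>j\<in>{1..n}. \<Union>x\<in>T j. ev j x)"
    by (rule measure_pmf.finite_measure_mono[OF cover]) simp
  also have "\<dots> \<le> (\<Sum>j\<in>{1..n}. ?P (\<Union>x\<in>T j. ev j x))"
    by (rule measure_pmf.finite_measure_subadditive_finite) simp_all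
  also have "\<dots> \<le> (\<Sum>j\<in>{1..n}. \<Sum>x\<in>T j. ?P (ev j x))"
    by (rule sum_mono, rule measure_pmf.finite_measure_subadditive_finite) (simp_all add: finT)
  also have "\<dots> \<le> (\<Sum>j\<in>{1..n}. \<Sum>x\<in>T j. (c / real n) ^ (k - 1))"
    by (intro sum_mono evb)
  also have "\<dots> = (\<Sum>j\<in>{1..n}. real (card (T j)) * (c / real n) ^ (k - 1))" by simp
  also have "\<dots> \<le> (\<Sum>j\<in>{1..n}. real (n choose k) * real k ^ (k - 1) * (c / real n) ^ (k - 1))"
    by (intro sum_mono mult_right_mono cardT) (use c in simp)
  also have "\<dots> = real n * (real (n choose k) * real k ^ (k - 1) * (c / real n) ^ (k - 1))" by simp
  finally show ?thesis .
qed



lemma pow_fact_le_exp: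
  fixes x :: real assumes "x \<ge> 0"
  shows "x ^ k / fact k \<le> exp x"
proof -
  have s: "(\<lambda>n. x ^ n / fact n) sums exp x"
    using exp_converges[of x] by (simp add: divide_inverse mult.commute scaleR_conv_of_real)
  have "(\<Sum>n\<in>{k}. x ^ n / fact n) \<le> (\<Sum>n. x ^ n / fact n)"
    by (rule sum_le_suminf) (use s assms in \<open>auto simp: sums_iff\<close>)
  then show ?thesis using s by (simp add: sums_iff)
qed

lemma comb_bound:
  assumes n: "n \<ge> 1" and k: "k = Suc m" and c: "c \<ge> 0"
  shows "real n * (real (n choose k) * real k ^ (k - 1) * (c / real n) ^ (k - 1))
     \<le> exp 1 * real n ^ 2 * (exp 1 * c) ^ (k - 1)"
proof -
  define N where "N = real n"
  define K where "K = real k"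
  have N: "N > 0" using n by (simp add: N_def)
  have fpos: "fact k > (0::real)" by simp
  have fb: "real (n choose k) * fact k \<le> N ^ k"
  proof -
    have "(n choose k) * fact k \<le> n ^ k" by (rule binomial_fact_pow)
    then have "real ((n choose k) * fact k) \<le> real (n ^ k)" by (rule of_nat_mono)
    then show ?thesis by (simp add: N_def)
  qed
  have A: "real (n choose k) \<le> N ^ k / fact k" using fb fpos by (simp add: field_simps)
  have Kk: "K ^ m \<le> K ^ k" using k by (simp add: K_def)
  have Kexp: "K ^ k / fact k \<le> exp K" by (rule pow_fact_le_exp) (simp add: K_def)
  have eK: "exp K = exp 1 ^ k"
    using exp_of_nat_mult[of k 1] by (simp add: K_def)
  have B: "K ^ m \<le> exp 1 ^ k * fact k"
    using Kk Kexp eK fpos by (simp add: field_simps)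
  have "real n * (real (n choose k) * real k ^ (k - 1) * (c / real n) ^ (k - 1))
      = N * real (n choose k) * K ^ m * (c ^ m / N ^ m)"
    by (simp add: N_def K_def k power_divide)
  also have "\<dots> \<le> N * (N ^ k / fact k) * (exp 1 ^ k * fact k) * (c ^ m / N ^ m)"
    using A B N c by (intro mult_right_mono mult_mono mult_left_mono) (auto simp: K_def)
  also have "\<dots> = N ^ 2 * exp 1 ^ k * c ^ m"
  proof -
    have f1: "(N ^ k / fact k) * (exp 1 ^ k * fact k) = N ^ k * exp 1 ^ k" using fpos by simp
    have f2: "N ^ k = N * N ^ m" by (simp add: k)
    have Nm: "N ^ m > 0" using N by simp
    have "N * (N ^ k / fact k) * (exp 1 ^ k * fact k) * (c ^ m / N ^ m)
        = N * (N * N ^ m * exp 1 ^ k) * (c ^ m / N ^ m)" using fpos by (simp add: f2 field_simps)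
    also have "\<dots> = N ^ 2 * exp 1 ^ k * c ^ m" using Nm by (simp add: power2_eq_square)
    finally show ?thesis .
  qed
  also have "\<dots> = exp 1 * real n ^ 2 * (exp 1 * c) ^ (k - 1)"
    by (simp add: N_def k power_mult_distrib)
  finally show ?thesis .
qed



theorem theorem2:
  fixes C \<theta> :: real and \<alpha> :: "nat \<Rightarrow> real"
  assumes "C > 0" and "C < exp (-1)" and "\<theta> > 0"
    and "\<And>n. \<alpha> n \<ge> 0" and "\<alpha> \<longlonglongrightarrow> 0"
  shows "\<exists>M>0. \<exists>L2>0. \<forall>n::nat. real n \<ge> L2 \<longrightarrow>
    (\<forall>p :: nat set \<Rightarrow> real.
       (\<forall>e\<in>Kn_edges n. 0 \<le> p e \<and> p e \<le> 1 \<and>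
            (C - \<alpha> n) / real n \<le> p e \<and> p e \<le> (C + \<alpha> n) / real n) \<longrightarrow>
       measure_pmf.prob (random_graph n p)
         {\<omega>. \<forall>j\<in>{1..n}. real (card (open_component n \<omega> j)) \<le> M * ln (real n)}
       \<ge> 1 - 1 / real n powr \<theta>)"
proof -
  define c0 where "c0 = (C + exp (-1)) / 2"
  have c0: "C < c0" "c0 < exp (-1)" using assms(2) by (auto simp: c0_def)
  define q where "q = exp 1 * c0"
  have q0: "q > 0" using c0 assms(1) by (simp add: q_def)
  have "exp 1 * exp (-1) = (1::real)" by (simp add: exp_minus)
  then have q1: "q < 1" unfolding q_def using c0(2) by (metis exp_gt_zero mult_strict_left_mono)
  have lnq: "ln q < 0" using q0 q1 by simp
  have "eventually (\<lambda>n. \<alpha> n < c0 - C) sequentially"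
    using order_tendstoD(2)[OF assms(5)] c0 by simp
  then obtain N where N: "\<And>n. n \<ge> N \<Longrightarrow> \<alpha> n < c0 - C" by (auto simp: eventually_sequentially)
  define M where "M = (3 + \<theta>) / (- ln q)"
  have th3: "3 + \<theta> > 0" using assms(3) by simp
  have M: "M > 0" unfolding M_def using th3 lnq by (intro divide_pos_pos) auto
  have Mq: "M * ln q = - (3 + \<theta>)" using lnq by (simp add: M_def)
  define L2 where "L2 = max (max 3 (real N)) (exp 1 / q)"
  have L2: "L2 > 0" by (simp add: L2_def)
  show ?thesis
  proof (rule exI[of _ M], rule conjI[OF M], rule exI[of _ L2], rule conjI[OF L2], intro allI impI)
    fix n :: nat and p :: "nat set \<Rightarrow> real"
    assume nL: "real n \<ge> L2"
    assume hp: "\<forall>e\<in>Kn_edges n. 0 \<le> p e \<and> p e \<le> 1 \<and>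
            (C - \<alpha> n) / real n \<le> p e \<and> p e \<le> (C + \<alpha> n) / real n"
    have n3: "real n \<ge> 3" and nN: "n \<ge> N" and nq: "real n \<ge> exp 1 / q"
      using nL by (auto simp: L2_def)
    have n1: "n \<ge> 1" using n3 by simp
    have npos: "real n > 0" using n3 by simp
    have pb: "\<forall>e\<in>Kn_edges n. 0 \<le> p e \<and> p e \<le> 1 \<and> p e \<le> c0 / real n"
    proof
      fix e assume e: "e \<in> Kn_edges n"
      have "(C + \<alpha> n) / real n \<le> c0 / real n"
        using N[OF nN] npos by (intro divide_right_mono) auto
      then show "0 \<le> p e \<and> p e \<le> 1 \<and> p e \<le> c0 / real n" using hp e by force
    qed
    define m where "m = nat \<lfloor>M * ln (real n)\<rfloor>"
    define k where "k = Suc m"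
    have lnn: "ln (real n) > 0" using n3 by simp
    have Mln: "M * ln (real n) \<ge> 0" using M lnn by simp
    have m_le: "real m \<le> M * ln (real n)" using Mln by (simp add: m_def)
    have m_ge: "real m \<ge> M * ln (real n) - 1" using Mln by (simp add: m_def)
    define bad where "bad = {\<omega>. \<exists>j\<in>{1..n}. k \<le> card (open_component n \<omega> j)}"
    let ?good = "{\<omega>. \<forall>j\<in>{1..n}. real (card (open_component n \<omega> j)) \<le> M * ln (real n)}"
    let ?P = "measure_pmf.prob (random_graph n p)"
    have sub: "UNIV - bad \<subseteq> ?good"
    proof
      fix \<omega> assume "\<omega> \<in> UNIV - bad"
      then have "\<forall>j\<in>{1..n}. card (open_component n \<omega> j) \<le> m" by (auto simp: bad_def k_def)
      then show "\<omega> \<in> ?good" using m_le by (auto intro: order_trans[OF of_nat_mono])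
    qed
    have pbad: "?P bad \<le> exp 1 * real n ^ 2 * q ^ m"
    proof -
      have "?P bad \<le> real n * (real (n choose k) * real k ^ (k - 1) * (c0 / real n) ^ (k - 1))"
        unfolding bad_def using c0 assms(1) n1 by (intro tail_bound pb) (auto simp: k_def)
      also have "\<dots> \<le> exp 1 * real n ^ 2 * (exp 1 * c0) ^ (k - 1)"
        using c0 assms(1) n1 by (intro comb_bound[OF n1 k_def]) auto
      finally show ?thesis by (simp add: q_def k_def)
    qed
    have qm: "q ^ m = exp (real m * ln q)"
      using q0 by (simp add: exp_of_nat_mult)
    have "real m * ln q \<le> (M * ln (real n) - 1) * ln q"
      using m_ge lnq by (intro mult_right_mono_neg) auto
    also have "\<dots> = (M * ln q) * ln (real n) - ln q" by (simp add: algebra_simps)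
    also have "\<dots> = - (3 + \<theta>) * ln (real n) - ln q" by (simp only: Mq)
    finally have mlq: "real m * ln q \<le> - (3 + \<theta>) * ln (real n) - ln q" .
    have lnbig: "ln (real n) \<ge> 1 - ln q"
    proof -
      have "ln (exp 1 / q) \<le> ln (real n)" using nq q0 npos by (subst ln_le_cancel_iff) auto
      then show ?thesis using q0 by (simp add: ln_div)
    qed
    have e2: "exp (2 * ln (real n)) = real n ^ 2"
      using exp_of_nat_mult[of 2 "ln (real n)"] npos by simp
    have "exp 1 * real n ^ 2 * q ^ m = exp (1 + 2 * ln (real n) + real m * ln q)"
      by (simp only: qm exp_add e2)
    also have "\<dots> \<le> exp (- \<theta> * ln (real n))"
    proof -
      have "- (3 + \<theta>) * ln (real n) = -3 * ln (real n) - \<theta> * ln (real n)" by (simp add: algebra_simps)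
      then have "1 + 2 * ln (real n) + real m * ln q \<le> - \<theta> * ln (real n)" using mlq lnbig by linarith
      then show ?thesis by simp
    qed
    also have "\<dots> = 1 / real n powr \<theta>"
      using npos by (simp add: powr_def exp_minus field_simps)
    finally have bnd: "exp 1 * real n ^ 2 * q ^ m \<le> 1 / real n powr \<theta>" .
    have "1 - 1 / real n powr \<theta> \<le> 1 - ?P bad" using pbad bnd by simp
    also have "\<dots> = ?P (UNIV - bad)"
      using measure_pmf.prob_compl[of bad "random_graph n p"] by simp
    also have "\<dots> \<le> ?P ?good"
      by (rule measure_pmf.finite_measure_mono[OF sub]) simp
    finally have fin: "1 - 1 / real n powr \<theta> \<le> ?P ?good" .
    show "1 - 1 / real n powr \<theta> \<le> ?P ?good" by (rule fin)
  qed
qed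


end
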